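(* Let $(p,q,n,m)\in\mathbb{Z}_{\geq 0}^4$ and suppose that $T_{p',q',n',m'}$ is $G_\infty$-Noetherian for all $(p',q',n',m')\in\mathbb{Z}_{\ge0}^4$ such that $(p',q',n')$ is lexicographically smaller than $(p,q,n)$. Then for every $r\in\mathbb{Z}_{\geq 0}$, each of the following subsets of $T_{p,q,n,m}$ (with the subspace topology) is $G_\infty$-Noetherian: (i) $\{x=(x_{\mathrm{sym}},x_{\mathrm{alt}},x_{\mathrm{col}},x_{\mathrm{fin}})\in T_{p,q,n,m}:\ \mathrm{rk}(x_{\mathrm{sym}})\leq r\}$; (ii) $\{x\in T_{p,q,n,m}:\ \mathrm{rk}(x_{\mathrm{alt}})\leq r\}$; (iii) $\{x\in T_{p,q,n,m}:\ \mathrm{rk}(x_{\mathrm{col}})<n\}$.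
   Context: $\mathbb{C}^\infty$ is the space of all complex sequences indexed by $\mathbb{N}$ (column vectors), $\mathbb{C}^\infty_{\mathrm{fin}}$ its subspace of finitely supported sequences; $\mathrm{Sym}_\infty$, $\mathrm{Alt}_\infty$ are the spaces of symmetric, respectively skew-symmetric, complex $\mathbb{N}\times\mathbb{N}$ matrices, viewed as linear maps $\mathbb{C}^\infty_{\mathrm{fin}}\to\mathbb{C}^\infty$. $T_{p,q,n,m}=\mathrm{Sym}_\infty^{p}\times\mathrm{Alt}_\infty^{q}\times(\mathbb{C}^\infty)^n\times\mathbb{C}^m$, and a point is written $x=(x_{\mathrm{sym}},x_{\mathrm{alt}},x_{\mathrm{col}},x_{\mathrm{fin}})$ accordingly. It carries the Zariski topology whose coordinate ring is the polynomial ring in all coordinates (each polynomial involves finitely many coordinates). $G_\infty=\bigcup_k\mathrm{GL}_k(\mathbb{C})$ (embedded via $g\mapsto\mathrm{diag}(g,\mathrm{Id})$) acts by $g\cdot M=gMg^T$ on matrices, by left multiplication on vectors in $\mathbb{C}^\infty$, and trivially on $\mathbb{C}^m$. A space with a $G$-action is $G$-Noetherian if every strictly descending chain of $G$-stable closed subsets has finite length. Rank of a tuple: for vector spaces $V,W$ and $M=(M_1,\dots,M_s)\in\mathrm{Hom}(V,W)^s$, $\mathrm{rk}(M)$ is the infimum of $\mathrm{rk}(\sum_i\lambda_iM_i)\in\mathbb{Z}_{\ge0}\cup\{\infty\}$ over all nonzero $(\lambda_1,\dots,\lambda_s)\in\mathbb{C}^s$ (so $\mathrm{rk}(M)=\infty$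 if $s=0$). For $x_{\mathrm{col}}=(v_1,\dots,v_n)\in(\mathbb{C}^\infty)^n$, $\mathrm{rk}(x_{\mathrm{col}})$ denotes the dimension of the span of $v_1,\dots,v_n$. *)

theory Defs
  imports Complex_Main
begin

text \<open>A point consists of a family of N x N matrices (symmetric part, indexed by k),
a family of N x N matrices (skew part), a family of column vectors in C^infinity
(indexed by k; entry i of vector k is pcol x k i) and a finite vector.\<close>

record pt =
  psym :: "nat \<Rightarrow> nat \<Rightarrow> nat \<Rightarrow> complex"
  palt :: "nat \<Rightarrow> nat \<Rightarrow> nat \<Rightarrow> complex"
  pcol :: "nat \<Rightarrow> nat \<Rightarrow> complex"
  pfin :: "nat \<Rightarrow> complex"

definition T :: "nat \<Rightarrow> nat \<Rightarrow> nat \<Rightarrow> nat \<Rightarrow> pt set" where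
  "T p q n m = {x.
      (\<forall>k i j. psym x k i j = psym x k j i) \<and> (\<forall>k i j. p \<le> k \<longrightarrow> psym x k i j = 0) \<and>
      (\<forall>k i j. palt x k i j = - palt x k j i) \<and> (\<forall>k i j. q \<le> k \<longrightarrow> palt x k i j = 0) \<and>
      (\<forall>k i. n \<le> k \<longrightarrow> pcol x k i = 0) \<and>
      (\<forall>k. m \<le> k \<longrightarrow> pfin x k = 0)}"

datatype coord = CSym nat nat nat | CAlt nat nat nat | CCol nat nat | CFin nat

fun coord_val :: "coord \<Rightarrow> pt \<Rightarrow> complex" where
  "coord_val (CSym k i j) x = psym x k i j"
| "coord_val (CAlt k i j) x = palt x k i j"
| "coord_val (CCol k i) x = pcol x k i"
| "coord_val (CFin k) x = pfin x k"

inductive_set polyfun :: "(pt \<Rightarrow> complex) set" where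
  pconst: "(\<lambda>_. c) \<in> polyfun"
| pcoord: "coord_val v \<in> polyfun"
| padd: "f \<in> polyfun \<Longrightarrow> g \<in> polyfun \<Longrightarrow> (\<lambda>x. f x + g x) \<in> polyfun"
| pmult: "f \<in> polyfun \<Longrightarrow> g \<in> polyfun \<Longrightarrow> (\<lambda>x. f x * g x) \<in> polyfun"

definition zariski_closed_in :: "pt set \<Rightarrow> pt set \<Rightarrow> bool" where
  "zariski_closed_in X Y \<longleftrightarrow> (\<exists>F. F \<subseteq> polyfun \<and> Y = {x \<in> X. \<forall>f\<in>F. f x = 0})"

definition Ginf :: "(nat \<Rightarrow> nat \<Rightarrow> complex) \<Rightarrow> bool" where
  "Ginf g \<longleftrightarrow> (\<exists>k h.
     (\<forall>i j. (k \<le> i \<or> k \<le> j) \<longrightarrow> g i j = (if i = j then 1 else 0)) \<and>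
     (\<forall>i j. (k \<le> i \<or> k \<le> j) \<longrightarrow> h i j = (if i = j then 1 else 0)) \<and>
     (\<forall>i<k. \<forall>j<k. (\<Sum>l<k. g i l * h l j) = (if i = j then 1 else 0)) \<and>
     (\<forall>i<k. \<forall>j<k. (\<Sum>l<k. h i l * g l j) = (if i = j then 1 else 0)))"

definition gvec :: "(nat \<Rightarrow> nat \<Rightarrow> complex) \<Rightarrow> (nat \<Rightarrow> complex) \<Rightarrow> (nat \<Rightarrow> complex)" where
  "gvec g v = (\<lambda>i. \<Sum>a\<in>{a. g i a \<noteq> 0}. g i a * v a)"

definition gmat :: "(nat \<Rightarrow> nat \<Rightarrow> complex) \<Rightarrow> (nat \<Rightarrow> nat \<Rightarrow> complex) \<Rightarrow> (nat \<Rightarrow> nat \<Rightarrow> complex)" where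
  "gmat g M = (\<lambda>i j. \<Sum>a\<in>{a. g i a \<noteq> 0}. \<Sum>b\<in>{b. g j b \<noteq> 0}. g i a * M a b * g j b)"

definition act :: "(nat \<Rightarrow> nat \<Rightarrow> complex) \<Rightarrow> pt \<Rightarrow> pt" where
  "act g x = \<lparr>psym = (\<lambda>k. gmat g (psym x k)), palt = (\<lambda>k. gmat g (palt x k)),
              pcol = (\<lambda>k. gvec g (pcol x k)), pfin = pfin x\<rparr>"

definition G_stable :: "pt set \<Rightarrow> bool" where
  "G_stable Y \<longleftrightarrow> (\<forall>g. Ginf g \<longrightarrow> act g ` Y \<subseteq> Y)"

definition G_noetherian :: "pt set \<Rightarrow> bool" where
  "G_noetherian X \<longleftrightarrow> \<not> (\<exists>C :: nat \<Rightarrow> pt set.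
      \<forall>i. zariski_closed_in X (C i) \<and> G_stable (C i) \<and> C (Suc i) \<subset> C i)"

definition span_dim_le :: "(nat \<Rightarrow> nat \<Rightarrow> complex) \<Rightarrow> nat set \<Rightarrow> nat \<Rightarrow> bool" where
  "span_dim_le vs I r \<longleftrightarrow> (\<exists>u :: nat \<Rightarrow> nat \<Rightarrow> complex.
      \<forall>j\<in>I. \<exists>c :: nat \<Rightarrow> complex. vs j = (\<lambda>i. \<Sum>l<r. c l * u l i))"

definition mat_rank_le :: "(nat \<Rightarrow> nat \<Rightarrow> complex) \<Rightarrow> nat \<Rightarrow> bool" where
  "mat_rank_le M r \<longleftrightarrow> span_dim_le (\<lambda>j i. M i j) UNIV r"

text \<open>rk(M_0,...,M_{s-1}) \<le> r, the rank of a tuple being the infimum over nonzero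
linear combinations (infinite when s = 0).\<close>
definition tuple_rank_le :: "nat \<Rightarrow> (nat \<Rightarrow> nat \<Rightarrow> nat \<Rightarrow> complex) \<Rightarrow> nat \<Rightarrow> bool" where
  "tuple_rank_le s M r \<longleftrightarrow> (\<exists>lam :: nat \<Rightarrow> complex. (\<exists>k<s. lam k \<noteq> 0) \<and>
      mat_rank_le (\<lambda>i j. \<Sum>k<s. lam k * M k i j) r)"

definition col_rank_lt :: "nat \<Rightarrow> (nat \<Rightarrow> nat \<Rightarrow> complex) \<Rightarrow> bool" where
  "col_rank_lt n vs \<longleftrightarrow> (\<exists>r<n. span_dim_le vs {..<n} r)"

end

theory Submission
  imports Defs
begin

lemma Gn_desc_stab:
  assumes "G_noetherian X"
    and cl: "\<And>i. zariski_closed_in X (C i) \<and> G_stable (C i)"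
    and dec: "\<And>i. C (Suc i) \<subseteq> C i"
  shows "\<exists>N. \<forall>k\<ge>N. C k = C N"
proof (rule ccontr)
  assume "\<not> ?thesis"
  hence ne: "\<forall>N. \<exists>k\<ge>N. C k \<noteq> C N" by blast
  have anti: "C k \<subseteq> C j" if "j \<le> k" for j k
    using that
  proof (induction k)
    case 0 then show ?case by simp
  next
    case (Suc k) then show ?case using dec[of k] by (auto simp: le_Suc_eq)
  qed
  have ex: "\<forall>N. \<exists>k>N. C k \<subset> C N"
  proof
    fix N
    obtain k where "k \<ge> N" "C k \<noteq> C N" using ne by blast
    then show "\<exists>k>N. C k \<subset> C N" using anti[of N k]
      by (metis le_neq_implies_less psubsetI)
  qed
  then obtain f where f: "\<And>N. f N > N \<and> C (f N) \<subset> C N" by metis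
  define s where "s i = (f ^^ i) 0" for i
  have "\<forall>i. zariski_closed_in X (C (s i)) \<and> G_stable (C (s i)) \<and> C (s (Suc i)) \<subset> C (s i)"
    using cl f by (simp add: s_def)
  then have "\<exists>C. \<forall>i. zariski_closed_in X (C i) \<and> G_stable (C i) \<and> C (Suc i) \<subset> C i"
    by (rule exI[of _ "\<lambda>i. C (s i)"])
  with assms(1) show False unfolding G_noetherian_def by blast
qed

lemma Gn_empty: "G_noetherian {}"
  unfolding G_noetherian_def zariski_closed_in_def by blast

lemma closed_in_sub:
  assumes "zariski_closed_in Y C" "A \<subseteq> Y"
  shows "zariski_closed_in A (C \<inter> A)"
  using assms unfolding zariski_closed_in_def by blast

lemma G_stable_Int: "G_stable A \<Longrightarrow> G_stable B \<Longrightarrow> G_stable (A \<inter> B)"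
  unfolding G_stable_def by blast

lemma G_stable_Un: "G_stable A \<Longrightarrow> G_stable B \<Longrightarrow> G_stable (A \<union> B)"
  unfolding G_stable_def by blast

lemma closed_sub: "zariski_closed_in X C \<Longrightarrow> C \<subseteq> X"
  unfolding zariski_closed_in_def by blast

lemma Gn_Un:
  assumes "G_noetherian A" "G_noetherian B" "G_stable A" "G_stable B"
  shows "G_noetherian (A \<union> B)"
  unfolding G_noetherian_def
proof
  assume "\<exists>C. \<forall>i. zariski_closed_in (A \<union> B) (C i) \<and> G_stable (C i) \<and> C (Suc i) \<subset> C i"
  then obtain C where C: "\<And>i. zariski_closed_in (A \<union> B) (C i) \<and> G_stable (C i) \<and> C (Suc i) \<subset> C i"
    by blast
  have h1: "zariski_closed_in A (C i \<inter> A) \<and> G_stable (C i \<inter> A)" for i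
    using closed_in_sub[OF conjunct1[OF C[of i]] Un_upper1] G_stable_Int[OF conjunct1[OF conjunct2[OF C[of i]]] assms(3)]
    by (rule conjI)
  have h2: "C (Suc i) \<inter> A \<subseteq> C i \<inter> A" for i using C[of i] by blast
  obtain N1 where N1: "\<forall>k\<ge>N1. C k \<inter> A = C N1 \<inter> A"
    using Gn_desc_stab[of A "\<lambda>i. C i \<inter> A", OF assms(1) h1 h2] by blast
  have h1': "zariski_closed_in B (C i \<inter> B) \<and> G_stable (C i \<inter> B)" for i
    using closed_in_sub[OF conjunct1[OF C[of i]] Un_upper2] G_stable_Int[OF conjunct1[OF conjunct2[OF C[of i]]] assms(4)]
    by (rule conjI)
  have h2': "C (Suc i) \<inter> B \<subseteq> C i \<inter> B" for i using C[of i] by blast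
  obtain N2 where N2: "\<forall>k\<ge>N2. C k \<inter> B = C N2 \<inter> B"
    using Gn_desc_stab[of B "\<lambda>i. C i \<inter> B", OF assms(2) h1' h2'] by blast
  define N where "N = max N1 N2"
  have s: "C k \<subseteq> A \<union> B" for k using closed_sub conjunct1[OF C[of k]] by blast
  have e1: "C (Suc N) \<inter> A = C N \<inter> A"
  proof -
    have l: "N1 \<le> Suc N" "N1 \<le> N" unfolding N_def by auto
    show ?thesis using N1[rule_format, OF l(1)] N1[rule_format, OF l(2)] by (rule trans[OF _ sym])
  qed
  have e2: "C (Suc N) \<inter> B = C N \<inter> B"
  proof -
    have l: "N2 \<le> Suc N" "N2 \<le> N" unfolding N_def by auto
    show ?thesis using N2[rule_format, OF l(1)] N2[rule_format, OF l(2)] by (rule trans[OF _ sym])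
  qed
  have "C (Suc N) = C N"
    using s[of N] s[of "Suc N"] e1 e2 by blast
  with C[of N] show False by simp
qed

lemma Gn_UN:
  fixes p :: nat
  assumes "\<And>j. j < p \<Longrightarrow> G_noetherian (Y j) \<and> G_stable (Y j)"
  shows "G_noetherian (\<Union>j<p. Y j) \<and> G_stable (\<Union>j<p. Y j)"
  using assms
proof (induction p)
  case 0
  then show ?case using Gn_empty by (simp add: G_stable_def)
next
  case (Suc p)
  have e: "(\<Union>j<Suc p. Y j) = (\<Union>j<p. Y j) \<union> Y p" by (simp add: lessThan_Suc Un_commute)
  have a: "G_noetherian (\<Union>j<p. Y j) \<and> G_stable (\<Union>j<p. Y j)" by (rule Suc.IH) (use Suc.prems in simp)
  have b: "G_noetherian (Y p) \<and> G_stable (Y p)" using Suc.prems by simp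
  show ?case unfolding e using Gn_Un[of "\<Union>j<p. Y j" "Y p"] G_stable_Un[of "\<Union>j<p. Y j" "Y p"] a b by blast
qed

lemma Gn_closed_sub:
  assumes "G_noetherian X" "zariski_closed_in X Z"
  shows "G_noetherian Z"
  unfolding G_noetherian_def
proof
  assume "\<exists>C. \<forall>i. zariski_closed_in Z (C i) \<and> G_stable (C i) \<and> C (Suc i) \<subset> C i"
  then obtain C where C: "\<And>i. zariski_closed_in Z (C i) \<and> G_stable (C i) \<and> C (Suc i) \<subset> C i"
    by blast
  obtain F where F: "F \<subseteq> polyfun" "Z = {x\<in>X. \<forall>f\<in>F. f x = 0}"
    using assms(2) unfolding zariski_closed_in_def by blast
  have "zariski_closed_in X (C i)" for i
  proof -
    obtain F' where F': "F' \<subseteq> polyfun" "C i = {x\<in>Z. \<forall>f\<in>F'. f x = 0}"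
      using C[of i] unfolding zariski_closed_in_def by blast
    show ?thesis unfolding zariski_closed_in_def
      by (rule exI[of _ "F \<union> F'"]) (use F F' in blast)
  qed
  then have "\<exists>C. \<forall>i. zariski_closed_in X (C i) \<and> G_stable (C i) \<and> C (Suc i) \<subset> C i"
    using C by blast
  with assms(1) show False unfolding G_noetherian_def by blast
qed


lemma pf_const: "(\<lambda>_. c) \<in> polyfun" by (rule polyfun.pconst)
lemma pf_add: "f \<in> polyfun \<Longrightarrow> g \<in> polyfun \<Longrightarrow> (\<lambda>x. f x + g x) \<in> polyfun" by (rule polyfun.padd)
lemma pf_mult: "f \<in> polyfun \<Longrightarrow> g \<in> polyfun \<Longrightarrow> (\<lambda>x. f x * g x) \<in> polyfun" by (rule polyfun.pmult)
lemma pf_neg: "f \<in> polyfun \<Longrightarrow> (\<lambda>x. - f x) \<in> polyfun"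
  using pf_mult[OF pf_const[of "-1"]] by simp
lemma pf_diff: "f \<in> polyfun \<Longrightarrow> g \<in> polyfun \<Longrightarrow> (\<lambda>x. f x - g x) \<in> polyfun"
  using pf_add[OF _ pf_neg, of f g] by simp
lemma pf_psym: "(\<lambda>x. psym x k i j) \<in> polyfun"
proof -
  have "coord_val (CSym k i j) = (\<lambda>x. psym x k i j)" by (rule ext) simp
  then show ?thesis using polyfun.pcoord[of "CSym k i j"] by simp
qed
lemma pf_palt: "(\<lambda>x. palt x k i j) \<in> polyfun"
proof -
  have "coord_val (CAlt k i j) = (\<lambda>x. palt x k i j)" by (rule ext) simp
  then show ?thesis using polyfun.pcoord[of "CAlt k i j"] by simp
qed
lemma pf_pcol: "(\<lambda>x. pcol x k i) \<in> polyfun"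
proof -
  have "coord_val (CCol k i) = (\<lambda>x. pcol x k i)" by (rule ext) simp
  then show ?thesis using polyfun.pcoord[of "CCol k i"] by simp
qed
lemma pf_pfin: "(\<lambda>x. pfin x k) \<in> polyfun"
proof -
  have "coord_val (CFin k) = (\<lambda>x. pfin x k)" by (rule ext) simp
  then show ?thesis using polyfun.pcoord[of "CFin k"] by simp
qed

lemma pf_sum:
  assumes "\<And>k. k \<in> K \<Longrightarrow> f k \<in> polyfun"
  shows "(\<lambda>x. \<Sum>k\<in>K. f k x) \<in> polyfun"
proof (cases "finite K")
  case True
  then show ?thesis using assms
  proof (induction K rule: finite_induct)
    case empty
    then show ?case using pf_const[of 0] by simp
  next
    case (insert k K)
    have "(\<lambda>x. f k x + (\<Sum>k\<in>K. f k x)) \<in> polyfun"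
      by (rule pf_add) (use insert in auto)
    then show ?case using insert.hyps by simp
  qed
next
  case False
  then show ?thesis using pf_const[of 0] by simp
qed

definition polymap :: "(pt \<Rightarrow> pt) \<Rightarrow> bool" where
  "polymap \<phi> \<longleftrightarrow> (\<forall>v. (\<lambda>x. coord_val v (\<phi> x)) \<in> polyfun)"

lemma polymapI:
  assumes "\<And>k i j. (\<lambda>x. psym (\<phi> x) k i j) \<in> polyfun"
    "\<And>k i j. (\<lambda>x. palt (\<phi> x) k i j) \<in> polyfun"
    "\<And>k i. (\<lambda>x. pcol (\<phi> x) k i) \<in> polyfun"
    "\<And>k. (\<lambda>x. pfin (\<phi> x) k) \<in> polyfun"
  shows "polymap \<phi>"
  unfolding polymap_def
proof
  fix v show "(\<lambda>x. coord_val v (\<phi> x)) \<in> polyfun" using assms by (cases v) auto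
qed

lemma pf_comp:
  assumes "f \<in> polyfun" "polymap \<phi>"
  shows "(\<lambda>x. f (\<phi> x)) \<in> polyfun"
  using assms(1)
proof (induction rule: polyfun.induct)
  case (pconst c) then show ?case by (rule polyfun.pconst)
next
  case (pcoord v) then show ?case using assms(2) unfolding polymap_def by blast
next
  case (padd f g) then show ?case using polyfun.padd by blast
next
  case (pmult f g) then show ?case using polyfun.pmult by blast
qed

lemma Gn_image:
  assumes X: "G_noetherian X"
    and eq: "\<And>g x. Ginf g \<Longrightarrow> x \<in> X \<Longrightarrow> act g x \<in> X \<and> \<phi> (act g x) = act g (\<phi> x)"
    and pm: "polymap \<phi>"
  shows "G_noetherian (\<phi> ` X) \<and> G_stable (\<phi> ` X)"
proof
  show "G_stable (\<phi> ` X)"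
    unfolding G_stable_def
  proof (intro allI impI subsetI)
    fix g y assume g: "Ginf g" and "y \<in> act g ` \<phi> ` X"
    then obtain x where x: "x \<in> X" "y = act g (\<phi> x)" by blast
    then have "y = \<phi> (act g x)" using eq[OF g x(1)] by simp
    then show "y \<in> \<phi> ` X" using eq[OF g x(1)] by blast
  qed
  show "G_noetherian (\<phi> ` X)"
    unfolding G_noetherian_def
  proof
    assume "\<exists>C. \<forall>i. zariski_closed_in (\<phi> ` X) (C i) \<and> G_stable (C i) \<and> C (Suc i) \<subset> C i"
    then obtain C where C: "\<And>i. zariski_closed_in (\<phi> ` X) (C i) \<and> G_stable (C i) \<and> C (Suc i) \<subset> C i"
      by blast
    define D where "D i = {x \<in> X. \<phi> x \<in> C i}" for i
    have "zariski_closed_in X (D i) \<and> G_stable (D i) \<and> D (Suc i) \<subset> D i" for i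
    proof (intro conjI)
      obtain F where F: "F \<subseteq> polyfun" "C i = {y \<in> \<phi> ` X. \<forall>f\<in>F. f y = 0}"
        using conjunct1[OF C[of i]] unfolding zariski_closed_in_def by blast
      have "D i = {x \<in> X. \<forall>f\<in>((\<lambda>f x. f (\<phi> x)) ` F). f x = 0}"
        unfolding D_def F(2) by auto
      moreover have "(\<lambda>f x. f (\<phi> x)) ` F \<subseteq> polyfun" using F(1) pf_comp[OF _ pm] by blast
      ultimately show "zariski_closed_in X (D i)" unfolding zariski_closed_in_def by blast
      show "G_stable (D i)" unfolding G_stable_def D_def
      proof (intro allI impI subsetI)
        fix g z assume g: "Ginf g" and "z \<in> act g ` {x \<in> X. \<phi> x \<in> C i}"
        then obtain x where x: "x \<in> X" "\<phi> x \<in> C i" "z = act g x" by blast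
        have "act g (\<phi> x) \<in> C i" using conjunct1[OF conjunct2[OF C[of i]]] g x(2)
          unfolding G_stable_def by blast
        then show "z \<in> {x \<in> X. \<phi> x \<in> C i}" using eq[OF g x(1)] x(3) by simp
      qed
      have s: "C j \<subseteq> \<phi> ` X" for j using closed_sub conjunct1[OF C[of j]] by blast
      show "D (Suc i) \<subset> D i"
      proof
        show "D (Suc i) \<subseteq> D i" using C[of i] unfolding D_def by blast
        obtain y where y: "y \<in> C i" "y \<notin> C (Suc i)" using C[of i] by blast
        then obtain x where "x \<in> X" "y = \<phi> x" using s[of i] by blast
        then show "D (Suc i) \<noteq> D i" using y unfolding D_def by blast
      qed
    qed
    then have "\<exists>C. \<forall>i. zariski_closed_in X (C i) \<and> G_stable (C i) \<and> C (Suc i) \<subset> C i"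
      by blast
    with X show False unfolding G_noetherian_def by blast
  qed
qed


lemma gvec_lin: "gvec g (\<lambda>a. \<Sum>l\<in>L. c l * v l a) i = (\<Sum>l\<in>L. c l * gvec g (v l) i)"
  unfolding gvec_def
  by (simp add: sum_distrib_left sum.swap[of _ L] mult.left_commute)

lemma gvec_zero: "gvec g (\<lambda>a. 0) = (\<lambda>i. 0)"
  unfolding gvec_def by simp

lemma gmat_zero: "gmat g (\<lambda>a b. 0) = (\<lambda>i j. 0)"
  unfolding gmat_def by simp

lemma gmat_sym:
  assumes "\<And>a b. M a b = e * M b a"
  shows "gmat g M i j = e * gmat g M j i"
  unfolding gmat_def
  apply (subst assms)
  apply (subst sum.swap)
  apply (simp add: sum_distrib_left mult_ac)
  done

lemma gmat_outer:
  "gmat g (\<lambda>a b. \<Sum>l\<in>L. U l a * W l b) i j = (\<Sum>l\<in>L. gvec g (U l) i * gvec g (W l) j)"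
proof -
  let ?A = "{a. g i a \<noteq> 0}" and ?B = "{b. g j b \<noteq> 0}"
  have "gmat g (\<lambda>a b. \<Sum>l\<in>L. U l a * W l b) i j
      = (\<Sum>a\<in>?A. \<Sum>b\<in>?B. \<Sum>l\<in>L. (g i a * U l a) * (g j b * W l b))"
    unfolding gmat_def by (simp add: sum_distrib_left sum_distrib_right mult_ac)
  also have "\<dots> = (\<Sum>a\<in>?A. \<Sum>l\<in>L. \<Sum>b\<in>?B. (g i a * U l a) * (g j b * W l b))"
    by (simp add: sum.swap[of _ ?B])
  also have "\<dots> = (\<Sum>l\<in>L. \<Sum>a\<in>?A. \<Sum>b\<in>?B. (g i a * U l a) * (g j b * W l b))"
    by (rule sum.swap)
  also have "\<dots> = (\<Sum>l\<in>L. gvec g (U l) i * gvec g (W l) j)"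
    unfolding gvec_def by (simp add: sum_product)
  finally show ?thesis .
qed

lemma gmat_diff:
  "gmat g (\<lambda>a b. M a b - (\<Sum>k\<in>K. c k * N k a b)) i j = gmat g M i j - (\<Sum>k\<in>K. c k * gmat g (N k) i j)"
proof -
  let ?A = "{a. g i a \<noteq> 0}" and ?B = "{b. g j b \<noteq> 0}"
  have "gmat g (\<lambda>a b. M a b - (\<Sum>k\<in>K. c k * N k a b)) i j
     = gmat g M i j - (\<Sum>a\<in>?A. \<Sum>b\<in>?B. \<Sum>k\<in>K. c k * (g i a * N k a b * g j b))"
    unfolding gmat_def by (simp add: left_diff_distrib right_diff_distrib sum_subtractf sum_distrib_left sum_distrib_right mult_ac)
  also have "(\<Sum>a\<in>?A. \<Sum>b\<in>?B. \<Sum>k\<in>K. c k * (g i a * N k a b * g j b))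
      = (\<Sum>a\<in>?A. \<Sum>k\<in>K. \<Sum>b\<in>?B. c k * (g i a * N k a b * g j b))"
    by (simp add: sum.swap[of _ ?B])
  also have "\<dots> = (\<Sum>k\<in>K. \<Sum>a\<in>?A. \<Sum>b\<in>?B. c k * (g i a * N k a b * g j b))"
    by (rule sum.swap)
  also have "\<dots> = (\<Sum>k\<in>K. c k * gmat g (N k) i j)"
    unfolding gmat_def by (simp add: sum_distrib_left)
  finally show ?thesis .
qed

lemma T_D:
  assumes "x \<in> T p q n m"
  shows "psym x k i j = psym x k j i" "palt x k i j = - palt x k j i"
    "p \<le> k \<Longrightarrow> psym x k i j = 0" "q \<le> k \<Longrightarrow> palt x k i j = 0"
    "n \<le> k \<Longrightarrow> pcol x k i = 0" "m \<le> k \<Longrightarrow> pfin x k = 0"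
  using assms unfolding T_def by blast+

lemma T_I:
  assumes "\<And>k i j. psym x k i j = psym x k j i" "\<And>k i j. palt x k i j = - palt x k j i"
    "\<And>k i j. p \<le> k \<Longrightarrow> psym x k i j = 0" "\<And>k i j. q \<le> k \<Longrightarrow> palt x k i j = 0"
    "\<And>k i. n \<le> k \<Longrightarrow> pcol x k i = 0" "\<And>k. m \<le> k \<Longrightarrow> pfin x k = 0"
  shows "x \<in> T p q n m"
  using assms unfolding T_def by blast

lemma act_T:
  assumes x: "x \<in> T p q n m"
  shows "act g x \<in> T p q n m"
proof (rule T_I)
  fix k i j
  have s: "psym x k a b = 1 * psym x k b a" for a b using T_D(1)[OF x] by simp
  have t: "palt x k a b = (-1) * palt x k b a" for a b using T_D(2)[OF x, of k a b] by simp
  show "psym (act g x) k i j = psym (act g x) k j i"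
    using gmat_sym[OF s, where g=g and i=i and j=j] by (simp add: act_def)
  show "palt (act g x) k i j = - palt (act g x) k j i"
    using gmat_sym[OF t, where g=g and i=i and j=j] by (simp add: act_def)
  show "psym (act g x) k i j = 0" if "p \<le> k"
  proof -
    have "psym x k = (\<lambda>a b. 0)" using T_D(3)[OF x that] by blast
    then show ?thesis by (simp add: gmat_zero act_def)
  qed
  show "palt (act g x) k i j = 0" if "q \<le> k"
  proof -
    have "palt x k = (\<lambda>a b. 0)" using T_D(4)[OF x that] by blast
    then show ?thesis by (simp add: gmat_zero act_def)
  qed
next
  fix k i
  show "pcol (act g x) k i = 0" if "n \<le> k"
  proof -
    have "pcol x k = (\<lambda>a. 0)" using T_D(5)[OF x that] by blast
    then show ?thesis by (simp add: gvec_zero act_def)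
  qed
next
  fix k
  show "pfin (act g x) k = 0" if "m \<le> k" using T_D(6)[OF x that] by (simp add: act_def)
qed


definition phiC :: "nat \<Rightarrow> nat \<Rightarrow> pt \<Rightarrow> pt" where
  "phiC n m x = \<lparr>psym = psym x, palt = palt x,
     pcol = (\<lambda>k. if k < n then (\<lambda>i. \<Sum>l<n-1. pfin x (m + l*n + k) * pcol x l i) else (\<lambda>i. 0)),
     pfin = (\<lambda>k. if k < m then pfin x k else 0)\<rparr>"

lemma phiC_eq: "phiC n m (act g x) = act g (phiC n m x)"
  unfolding phiC_def act_def by (auto simp: gvec_lin gvec_zero fun_eq_iff)

lemma phiC_poly: "polymap (phiC n m)"
proof (rule polymapI)
  fix k i j
  show "(\<lambda>x. psym (phiC n m x) k i j) \<in> polyfun" unfolding phiC_def by (simp add: pf_psym)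
  show "(\<lambda>x. palt (phiC n m x) k i j) \<in> polyfun" unfolding phiC_def by (simp add: pf_palt)
next
  fix k i
  show "(\<lambda>x. pcol (phiC n m x) k i) \<in> polyfun"
  proof (cases "k < n")
    case True
    then show ?thesis unfolding phiC_def
      by (simp add: pf_sum pf_mult pf_pfin pf_pcol)
  next
    case False
    then show ?thesis unfolding phiC_def by (simp add: pf_const)
  qed
next
  fix k
  show "(\<lambda>x. pfin (phiC n m x) k) \<in> polyfun"
    unfolding phiC_def by (cases "k < m") (simp_all add: pf_pfin pf_const)
qed

lemma phiC_T:
  assumes x: "x \<in> T p q (n-1) m'"
  shows "phiC n m x \<in> T p q n m"
proof (rule T_I)
  fix k i j
  show "psym (phiC n m x) k i j = psym (phiC n m x) k j i" using T_D(1)[OF x] by (simp add: phiC_def)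
  show "palt (phiC n m x) k i j = - palt (phiC n m x) k j i" using T_D(2)[OF x, of k i j] by (simp add: phiC_def)
  show "psym (phiC n m x) k i j = 0" if "p \<le> k" using T_D(3)[OF x that] by (simp add: phiC_def)
  show "palt (phiC n m x) k i j = 0" if "q \<le> k" using T_D(4)[OF x that] by (simp add: phiC_def)
next
  fix k i
  show "pcol (phiC n m x) k i = 0" if "n \<le> k" using that by (simp add: phiC_def)
next
  fix k
  show "pfin (phiC n m x) k = 0" if "m \<le> k" using that by (simp add: phiC_def)
qed

lemma idx_lt:
  fixes l k n :: nat
  assumes "l < n - 1" "k < n"
  shows "l * n + k < n * n"
proof -
  have "l * n + k < l * n + n" using assms by simp
  also have "\<dots> = (l + 1) * n" by simp
  also have "\<dots> \<le> n * n" using assms by (intro mult_right_mono) auto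
  finally show ?thesis .
qed

lemma phiC_image:
  assumes n: "0 < n"
  shows "{x \<in> T p q n m. col_rank_lt n (pcol x)} = phiC n m ` T p q (n-1) (m + n*n)"
proof (intro equalityI subsetI)
  fix y assume "y \<in> phiC n m ` T p q (n-1) (m + n*n)"
  then obtain x where x: "x \<in> T p q (n-1) (m + n*n)" "y = phiC n m x" by blast
  have "span_dim_le (pcol y) {..<n} (n-1)"
    unfolding span_dim_le_def
  proof (intro exI[of _ "pcol x"] ballI)
    fix j assume "j \<in> {..<n}"
    then show "\<exists>c. pcol y j = (\<lambda>i. \<Sum>l<n - 1. c l * pcol x l i)"
      by (intro exI[of _ "\<lambda>l. pfin x (m + l*n + j)"]) (simp add: x(2) phiC_def)
  qed
  then have "col_rank_lt n (pcol y)" unfolding col_rank_lt_def using n by (intro exI[of _ "n-1"]) simp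
  then show "y \<in> {x \<in> T p q n m. col_rank_lt n (pcol x)}" using phiC_T[OF x(1)] x(2) by simp
next
  fix y assume y: "y \<in> {x \<in> T p q n m. col_rank_lt n (pcol x)}"
  then obtain r u where r: "r < n" and u: "\<forall>j\<in>{..<n}. \<exists>c. pcol y j = (\<lambda>i. \<Sum>l<r. c l * u l i)"
    unfolding col_rank_lt_def span_dim_le_def by blast
  obtain cf where cf: "\<And>j. j < n \<Longrightarrow> pcol y j = (\<lambda>i. \<Sum>l<r. cf j l * u l i)"
    using bchoice[OF u] by auto
  have yT: "y \<in> T p q n m" using y by simp
  define x where "x = \<lparr>psym = psym y, palt = palt y, pcol = (\<lambda>l. if l < r then u l else (\<lambda>i. 0)),
     pfin = (\<lambda>t. if t < m then pfin y t else if t < m + n*n then cf ((t-m) mod n) ((t-m) div n) else 0)\<rparr>"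
  have xT: "x \<in> T p q (n-1) (m + n*n)"
  proof (rule T_I)
    fix k i j
    show "psym x k i j = psym x k j i" using T_D(1)[OF yT] by (simp add: x_def)
    show "palt x k i j = - palt x k j i" using T_D(2)[OF yT, of k i j] by (simp add: x_def)
    show "psym x k i j = 0" if "p \<le> k" using T_D(3)[OF yT that] by (simp add: x_def)
    show "palt x k i j = 0" if "q \<le> k" using T_D(4)[OF yT that] by (simp add: x_def)
  next
    fix k i
    show "pcol x k i = 0" if "n - 1 \<le> k"
    proof -
      have "\<not> k < r" using that r by arith
      then show ?thesis by (simp add: x_def)
    qed
  next
    fix k
    show "pfin x k = 0" if "m + n*n \<le> k" using that by (simp add: x_def)
  qed
  have pc: "pcol (phiC n m x) k = pcol y k" for k
  proof (cases "k < n")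
    case True
    have "pcol (phiC n m x) k i = pcol y k i" for i
    proof -
      have "pcol (phiC n m x) k i = (\<Sum>l<n-1. pfin x (m + l*n + k) * pcol x l i)"
        using True by (simp add: phiC_def)
      also have "\<dots> = (\<Sum>l<r. cf k l * u l i)"
      proof (rule sum.mono_neutral_cong_right)
        show "finite {..<n-1}" by simp
        show "{..<r} \<subseteq> {..<n-1}" using r by auto
        show "\<forall>l\<in>{..<n-1} - {..<r}. pfin x (m + l*n + k) * pcol x l i = 0" by (simp add: x_def)
        show "pfin x (m + l*n + k) * pcol x l i = cf k l * u l i" if "l \<in> {..<r}" for l
        proof -
          have l: "l < n - 1" using that r by auto
          have "(l*n + k) mod n = k" "(l*n + k) div n = l" using True by auto
          moreover have "m + l*n + k < m + n*n" using idx_lt[OF l True] by simp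
          ultimately show ?thesis using that by (simp add: x_def)
        qed
      qed
      also have "\<dots> = pcol y k i" using cf[OF True] by simp
      finally show ?thesis .
    qed
    then show ?thesis by (simp add: fun_eq_iff)
  next
    case False
    then show ?thesis using T_D(5)[OF yT] by (auto simp: phiC_def fun_eq_iff)
  qed
  have "phiC n m x = y"
  proof (rule pt.equality)
    show "psym (phiC n m x) = psym y" by (simp add: phiC_def x_def)
    show "palt (phiC n m x) = palt y" by (simp add: phiC_def x_def)
    show "pcol (phiC n m x) = pcol y" using pc by (simp add: fun_eq_iff)
    show "pfin (phiC n m x) = pfin y" using T_D(6)[OF yT] by (auto simp: phiC_def x_def fun_eq_iff)
    show "pt.more (phiC n m x) = pt.more y" by (simp add: phiC_def)
  qed
  then show "y \<in> phiC n m ` T p q (n-1) (m + n*n)" using xT by blast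
qed

lemma part3:
  assumes "n = 0 \<or> G_noetherian (T p q (n-1) (m + n*n))"
  shows "G_noetherian {x \<in> T p q n m. col_rank_lt n (pcol x)}"
proof (cases "n = 0")
  case True
  then have e: "{x \<in> T p q n m. col_rank_lt n (pcol x)} = {}" unfolding col_rank_lt_def by simp
  show ?thesis unfolding e by (rule Gn_empty)
next
  case False
  then have X: "G_noetherian (T p q (n-1) (m + n*n))" using assms by simp
  have n: "0 < n" using False by simp
  have eq: "act g x \<in> T p q (n-1) (m + n*n) \<and> phiC n m (act g x) = act g (phiC n m x)"
    if "x \<in> T p q (n-1) (m + n*n)" for g x
    using act_T[OF that] phiC_eq by blast
  have "G_noetherian (phiC n m ` T p q (n-1) (m + n*n))"
    using Gn_image[OF X eq phiC_poly] by blast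
  then show ?thesis unfolding phiC_image[OF n] .
qed


definition NS :: "nat \<Rightarrow> nat \<Rightarrow> pt \<Rightarrow> nat \<Rightarrow> nat \<Rightarrow> complex" where
  "NS n r x = (\<lambda>a b. \<Sum>l<r. pcol x (n+l) a * pcol x (n+r+l) b)"

definition sh :: "nat \<Rightarrow> nat \<Rightarrow> nat" where "sh j k = (if k < j then k else k - 1)"

definition slot :: "nat \<Rightarrow> nat \<Rightarrow> nat \<Rightarrow> nat \<Rightarrow> nat \<Rightarrow> (nat \<Rightarrow> nat \<Rightarrow> nat \<Rightarrow> complex) \<Rightarrow> pt
    \<Rightarrow> nat \<Rightarrow> nat \<Rightarrow> nat \<Rightarrow> complex" where
  "slot j p n m r M x = (\<lambda>k. if k = j then (\<lambda>a b. NS n r x a b - (\<Sum>k'\<in>{..<p}-{j}. pfin x (m+k') * M (sh j k') a b))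
      else if k < p then M (sh j k) else (\<lambda>a b. 0))"

lemma NS_act: "NS n r (act g x) = gmat g (NS n r x)"
  unfolding NS_def by (simp add: act_def gmat_outer fun_eq_iff)

lemma slot_act: "slot j p n m r (\<lambda>k. gmat g (M k)) (act g x) k = gmat g (slot j p n m r M x k)"
proof -
  have "pfin (act g x) = pfin x" by (simp add: act_def)
  then show ?thesis
    unfolding slot_def by (auto simp: NS_act gmat_diff gmat_zero fun_eq_iff)
qed

lemma slot_sum:
  assumes "j < p" "\<mu> j = 1" "\<And>k. k < p \<Longrightarrow> k \<noteq> j \<Longrightarrow> \<mu> k = pfin x (m+k)"
  shows "(\<Sum>k<p. \<mu> k * slot j p n m r M x k a b) = NS n r x a b"
proof -
  have f: "finite {..<p}" by simp
  have "(\<Sum>k<p. \<mu> k * slot j p n m r M x k a b)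
      = \<mu> j * slot j p n m r M x j a b + (\<Sum>k\<in>{..<p}-{j}. \<mu> k * slot j p n m r M x k a b)"
    using sum.remove[OF f, of j] assms(1) by simp
  also have "(\<Sum>k\<in>{..<p}-{j}. \<mu> k * slot j p n m r M x k a b) = (\<Sum>k\<in>{..<p}-{j}. pfin x (m+k) * M (sh j k) a b)"
    by (rule sum.cong) (auto simp: slot_def assms(3))
  finally show ?thesis using assms(2) by (simp add: slot_def)
qed

lemma slot_eps:
  assumes M: "\<And>k a b. M k a b = e * M k b a" and NS: "\<And>a b. NS n r x a b = e * NS n r x b a"
  shows "slot j p n m r M x k a b = e * slot j p n m r M x k b a"
proof -
  have s: "(\<Sum>k'\<in>{..<p}-{j}. pfin x (m+k') * M (sh j k') a b) = e * (\<Sum>k'\<in>{..<p}-{j}. pfin x (m+k') * M (sh j k') b a)"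
    unfolding sum_distrib_left
  proof (rule sum.cong)
    fix k' show "pfin x (m+k') * M (sh j k') a b = e * (pfin x (m+k') * M (sh j k') b a)"
      using M[of "sh j k'" a b] by (simp add: mult_ac)
  qed simp
  show ?thesis
  proof (cases "k = j")
    case True
    then show ?thesis unfolding slot_def using s NS[of a b] by (simp add: right_diff_distrib)
  next
    case False
    then show ?thesis unfolding slot_def using M[of "sh j k" a b] by simp
  qed
qed

lemma slot_zero: "j < p \<Longrightarrow> p \<le> k \<Longrightarrow> slot j p n m r M x k a b = 0"
  unfolding slot_def by simp

lemma pf_NS: "(\<lambda>x. NS n r x a b) \<in> polyfun"
  unfolding NS_def by (simp add: pf_sum pf_mult pf_pcol)

lemma slot_poly:
  assumes "\<And>k a b. (\<lambda>x. Mx x k a b) \<in> polyfun"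
  shows "(\<lambda>x. slot j p n m r (Mx x) x k a b) \<in> polyfun"
proof (cases "k = j")
  case True
  then show ?thesis unfolding slot_def
    by (simp add: pf_diff pf_NS pf_sum pf_mult pf_pfin assms)
next
  case False
  then show ?thesis unfolding slot_def by (cases "k < p") (simp_all add: assms pf_const)
qed

lemma slot_surj:
  assumes j: "j < p" and mu: "\<mu> j = 1" and fin: "\<And>k. k < p \<Longrightarrow> k \<noteq> j \<Longrightarrow> pfin x (m+k) = \<mu> k"
    and N: "\<And>a b. NS n r x a b = (\<Sum>k<p. \<mu> k * Y k a b)"
    and Yz: "\<And>k a b. p \<le> k \<Longrightarrow> Y k a b = 0"
  shows "slot j p n m r (\<lambda>k. if k < j then Y k else if k < p - 1 then Y (k+1) else (\<lambda>a b. 0)) x k a b = Y k a b"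
proof -
  let ?M = "(\<lambda>k. if k < j then Y k else if k < p - 1 then Y (k+1) else (\<lambda>a b. 0))"
  have Msh: "?M (sh j k) = Y k" if "k < p" "k \<noteq> j" for k
    using that j by (auto simp: sh_def)
  have f: "finite {..<p}" by simp
  show ?thesis
  proof (cases "k = j")
    case True
    have "(\<Sum>k\<in>{..<p}-{j}. pfin x (m+k) * ?M (sh j k) a b) = (\<Sum>k\<in>{..<p}-{j}. \<mu> k * Y k a b)"
      by (rule sum.cong) (auto simp: fin Msh)
    moreover have "(\<Sum>k<p. \<mu> k * Y k a b) = \<mu> j * Y j a b + (\<Sum>k\<in>{..<p}-{j}. \<mu> k * Y k a b)"
      using sum.remove[OF f, of j] j by simp
    ultimately show ?thesis using True mu N unfolding slot_def by simp
  next
    case False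
    then show ?thesis unfolding slot_def using Msh Yz by auto
  qed
qed

lemma mat_rank_NS: "mat_rank_le (NS n r x) r"
  unfolding mat_rank_le_def span_dim_le_def
proof (intro exI[of _ "\<lambda>l. pcol x (n+l)"] ballI)
  fix b :: nat
  show "\<exists>c. (\<lambda>i. NS n r x i b) = (\<lambda>i. \<Sum>l<r. c l * pcol x (n + l) i)"
    by (intro exI[of _ "\<lambda>l. pcol x (n+r+l) b"]) (simp add: NS_def mult.commute)
qed

lemma mat_rank_scale:
  assumes "mat_rank_le M r"
  shows "mat_rank_le (\<lambda>a b. c * M a b) r"
proof -
  obtain u where u: "\<forall>j. \<exists>d. (\<lambda>i. M i j) = (\<lambda>i. \<Sum>l<r. d l * u l i)"
    using assms unfolding mat_rank_le_def span_dim_le_def by blast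
  show ?thesis unfolding mat_rank_le_def span_dim_le_def
  proof (intro exI[of _ u] ballI)
    fix j :: nat
    obtain d where d: "(\<lambda>i. M i j) = (\<lambda>i. \<Sum>l<r. d l * u l i)" using u by blast
    show "\<exists>d. (\<lambda>i. c * M i j) = (\<lambda>i. \<Sum>l<r. d l * u l i)"
      by (intro exI[of _ "\<lambda>l. c * d l"]) (simp add: fun_eq_iff sum_distrib_left mult_ac d[unfolded fun_eq_iff, rule_format])
  qed
qed

lemma mat_rank_decomp:
  assumes "mat_rank_le N r"
  obtains u cf where "\<And>a b. N a b = (\<Sum>l<r. u l a * cf b l)"
proof -
  obtain u where u: "\<forall>j. \<exists>d. (\<lambda>i. N i j) = (\<lambda>i. \<Sum>l<r. d l * u l i)"
    using assms unfolding mat_rank_le_def span_dim_le_def by blast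
  then obtain cf where cf: "\<And>j. (\<lambda>i. N i j) = (\<lambda>i. \<Sum>l<r. cf j l * u l i)" by metis
  have "N a b = (\<Sum>l<r. u l a * cf b l)" for a b
    using cf[of b] by (simp add: fun_eq_iff mult.commute)
  then show ?thesis using that by blast
qed

definition srcCol :: "nat \<Rightarrow> nat \<Rightarrow> (nat \<Rightarrow> nat \<Rightarrow> complex) \<Rightarrow> (nat \<Rightarrow> nat \<Rightarrow> complex) \<Rightarrow> (nat \<Rightarrow> nat \<Rightarrow> complex)
   \<Rightarrow> nat \<Rightarrow> nat \<Rightarrow> complex" where
  "srcCol n r Y u cf = (\<lambda>t. if t < n then Y t else if t < n + r then u (t - n)
      else if t < n + 2*r then (\<lambda>b. cf b (t - n - r)) else (\<lambda>i. 0))"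

lemma NS_src:
  assumes "pcol x = srcCol n r Y u cf"
  shows "NS n r x a b = (\<Sum>l<r. u l a * cf b l)"
  unfolding NS_def assms srcCol_def by (intro sum.cong) auto

definition srcFin :: "nat \<Rightarrow> nat \<Rightarrow> (nat \<Rightarrow> complex) \<Rightarrow> (nat \<Rightarrow> complex) \<Rightarrow> nat \<Rightarrow> complex" where
  "srcFin m p f \<mu> = (\<lambda>t. if t < m then f t else if t < m + p then \<mu> (t - m) else 0)"


definition phiS :: "nat \<Rightarrow> nat \<Rightarrow> nat \<Rightarrow> nat \<Rightarrow> nat \<Rightarrow> pt \<Rightarrow> pt" where
  "phiS j p n m r x = \<lparr>psym = slot j p n m r (psym x) x, palt = palt x,
     pcol = (\<lambda>k. if k < n then pcol x k else (\<lambda>i. 0)), pfin = (\<lambda>k. if k < m then pfin x k else 0)\<rparr>"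

definition XS :: "nat \<Rightarrow> nat \<Rightarrow> nat \<Rightarrow> nat \<Rightarrow> nat \<Rightarrow> pt set" where
  "XS p q n m r = {x \<in> T (p-1) q (n+2*r) (m+p). \<forall>a b. NS n r x a b = NS n r x b a}"

lemma XS_closed: "zariski_closed_in (T (p-1) q (n+2*r) (m+p)) (XS p q n m r)"
  unfolding zariski_closed_in_def
proof (intro exI conjI)
  let ?F = "(\<lambda>(a,b). (\<lambda>x. NS n r x a b - NS n r x b a)) ` UNIV"
  show "?F \<subseteq> polyfun" using pf_diff[OF pf_NS pf_NS] by auto
  show "XS p q n m r = {x \<in> T (p-1) q (n+2*r) (m+p). \<forall>f\<in>?F. f x = 0}"
    unfolding XS_def by auto
qed

lemma XS_act:
  assumes "x \<in> XS p q n m r"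
  shows "act g x \<in> XS p q n m r"
proof -
  have x: "x \<in> T (p-1) q (n+2*r) (m+p)" and s: "\<And>a b. NS n r x a b = 1 * NS n r x b a"
    using assms unfolding XS_def by auto
  have "NS n r (act g x) a b = NS n r (act g x) b a" for a b
    unfolding NS_act using gmat_sym[OF s, where g=g and i=a and j=b] by simp
  then show ?thesis using act_T[OF x] unfolding XS_def by blast
qed

lemma phiS_eq: "phiS j p n m r (act g x) = act g (phiS j p n m r x)"
proof -
  have "slot j p n m r (psym (act g x)) (act g x) = (\<lambda>k. gmat g (slot j p n m r (psym x) x k))"
    using slot_act[of j p n m r g "psym x" x] by (simp add: act_def fun_eq_iff)
  then show ?thesis unfolding phiS_def by (simp add: act_def gvec_zero fun_eq_iff)
qed

lemma phiS_poly: "polymap (phiS j p n m r)"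
proof (rule polymapI)
  fix k i j'
  show "(\<lambda>x. psym (phiS j p n m r x) k i j') \<in> polyfun"
    unfolding phiS_def using slot_poly[where Mx="\<lambda>x. psym x", OF pf_psym] by simp
  show "(\<lambda>x. palt (phiS j p n m r x) k i j') \<in> polyfun" unfolding phiS_def by (simp add: pf_palt)
next
  fix k i
  show "(\<lambda>x. pcol (phiS j p n m r x) k i) \<in> polyfun"
    unfolding phiS_def by (cases "k < n") (simp_all add: pf_pcol pf_const)
next
  fix k
  show "(\<lambda>x. pfin (phiS j p n m r x) k) \<in> polyfun"
    unfolding phiS_def by (cases "k < m") (simp_all add: pf_pfin pf_const)
qed

lemma phiS_T:
  assumes j: "j < p" and xX: "x \<in> XS p q n m r"
  shows "phiS j p n m r x \<in> T p q n m"
proof -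
  have x: "x \<in> T (p-1) q (n+2*r) (m+p)" and s: "\<And>a b. NS n r x a b = 1 * NS n r x b a"
    using xX unfolding XS_def by auto
  have M: "psym x k a b = 1 * psym x k b a" for k a b using T_D(1)[OF x] by simp
  show ?thesis
  proof (rule T_I)
    fix k i j'
    show "psym (phiS j p n m r x) k i j' = psym (phiS j p n m r x) k j' i"
      using slot_eps[OF M s, where j=j and p=p and m=m and k=k and a=i and b=j'] by (simp add: phiS_def)
    show "palt (phiS j p n m r x) k i j' = - palt (phiS j p n m r x) k j' i"
      using T_D(2)[OF x, of k i j'] by (simp add: phiS_def)
    show "psym (phiS j p n m r x) k i j' = 0" if "p \<le> k"
      using slot_zero[OF j that] by (simp add: phiS_def)
    show "palt (phiS j p n m r x) k i j' = 0" if "q \<le> k"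
      using T_D(4)[OF x that] by (simp add: phiS_def)
  next
    fix k i show "pcol (phiS j p n m r x) k i = 0" if "n \<le> k" using that by (simp add: phiS_def)
  next
    fix k show "pfin (phiS j p n m r x) k = 0" if "m \<le> k" using that by (simp add: phiS_def)
  qed
qed

lemma phiS_rank:
  assumes j: "j < p"
  shows "tuple_rank_le p (psym (phiS j p n m r x)) r"
proof -
  define mu where "mu = (\<lambda>k. if k = j then 1 else pfin x (m+k))"
  have a: "\<exists>k<p. mu k \<noteq> 0" using j by (intro exI[of _ j]) (simp add: mu_def)
  have "(\<lambda>a b. \<Sum>k<p. mu k * psym (phiS j p n m r x) k a b) = NS n r x"
    using slot_sum[OF j, of mu x m n r "psym x"] by (simp add: phiS_def fun_eq_iff mu_def)
  then have b: "mat_rank_le (\<lambda>a b. \<Sum>k<p. mu k * psym (phiS j p n m r x) k a b) r"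
    using mat_rank_NS by simp
  show ?thesis unfolding tuple_rank_le_def using a b by blast
qed

lemma S_sub:
  "{y \<in> T p q n m. tuple_rank_le p (psym y) r} \<subseteq> (\<Union>j<p. phiS j p n m r ` XS p q n m r)"
proof
  fix y assume "y \<in> {y \<in> T p q n m. tuple_rank_le p (psym y) r}"
  then have yT: "y \<in> T p q n m" and "tuple_rank_le p (psym y) r" by auto
  then obtain lam j where j: "j < p" "lam j \<noteq> 0"
    and rk: "mat_rank_le (\<lambda>a b. \<Sum>k<p. lam k * psym y k a b) r"
    unfolding tuple_rank_le_def by blast
  define mu where "mu k = lam k / lam j" for k
  have mu1: "mu j = 1" using j unfolding mu_def by simp
  define N where "N = (\<lambda>a b. \<Sum>k<p. mu k * psym y k a b)"
  have eqN: "N = (\<lambda>a b. (1 / lam j) * (\<Sum>k<p. lam k * psym y k a b))"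
    unfolding N_def mu_def by (simp add: sum_distrib_left fun_eq_iff)
  have NR: "mat_rank_le N r" unfolding eqN by (rule mat_rank_scale[OF rk])
  obtain u cf where ucf: "\<And>a b. N a b = (\<Sum>l<r. u l a * cf b l)"
    using mat_rank_decomp[OF NR] by blast
  define x where "x = \<lparr>psym = (\<lambda>k. if k < j then psym y k else if k < p - 1 then psym y (k+1) else (\<lambda>a b. 0)),
      palt = palt y, pcol = srcCol n r (pcol y) u cf, pfin = srcFin m p (pfin y) mu\<rparr>"
  have NSx: "NS n r x a b = N a b" for a b
    using NS_src[of x n r "pcol y" u cf] ucf by (simp add: x_def)
  have Nsym: "N a b = N b a" for a b
    unfolding N_def using T_D(1)[OF yT] by simp
  have xT: "x \<in> T (p-1) q (n+2*r) (m+p)"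
  proof (rule T_I)
    fix k i j'
    show "psym x k i j' = psym x k j' i" using T_D(1)[OF yT] by (simp add: x_def)
    show "palt x k i j' = - palt x k j' i" using T_D(2)[OF yT, of k i j'] by (simp add: x_def)
    show "psym x k i j' = 0" if "p - 1 \<le> k"
    proof -
      have "\<not> k < j" using that j by arith
      then show ?thesis using that by (simp add: x_def)
    qed
    show "palt x k i j' = 0" if "q \<le> k" using T_D(4)[OF yT that] by (simp add: x_def)
  next
    fix k i show "pcol x k i = 0" if "n + 2*r \<le> k" using that by (simp add: x_def srcCol_def)
  next
    fix k show "pfin x k = 0" if "m + p \<le> k" using that by (simp add: x_def srcFin_def)
  qed
  have xX: "x \<in> XS p q n m r" unfolding XS_def using xT NSx Nsym by simp
  have "phiS j p n m r x = y"
  proof (rule pt.equality)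
    have "slot j p n m r (psym x) x k a b = psym y k a b" for k a b
    proof -
      have e: "psym x = (\<lambda>k. if k < j then psym y k else if k < p - 1 then psym y (k+1) else (\<lambda>a b. 0))"
        by (simp add: x_def)
      show ?thesis unfolding e
      proof (rule slot_surj[where \<mu>=mu and Y="psym y", OF j(1) mu1])
        show "pfin x (m+k) = mu k" if "k < p" "k \<noteq> j" for k using that by (simp add: x_def srcFin_def)
        show "NS n r x a b = (\<Sum>k<p. mu k * psym y k a b)" for a b using NSx N_def by simp
        show "psym y k a b = 0" if "p \<le> k" for k a b using T_D(3)[OF yT that] .
      qed
    qed
    then show "psym (phiS j p n m r x) = psym y" by (simp add: phiS_def fun_eq_iff)
    show "palt (phiS j p n m r x) = palt y" by (simp add: phiS_def x_def)
    show "pcol (phiS j p n m r x) = pcol y"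
      using T_D(5)[OF yT] by (auto simp: phiS_def x_def srcCol_def fun_eq_iff)
    show "pfin (phiS j p n m r x) = pfin y"
      using T_D(6)[OF yT] by (auto simp: phiS_def x_def srcFin_def fun_eq_iff)
    show "pt.more (phiS j p n m r x) = pt.more y" by (simp add: phiS_def)
  qed
  then show "y \<in> (\<Union>j<p. phiS j p n m r ` XS p q n m r)" using xX j by blast
qed

lemma part1:
  assumes "0 < p \<Longrightarrow> G_noetherian (T (p-1) q (n+2*r) (m+p))"
  shows "G_noetherian {y \<in> T p q n m. tuple_rank_le p (psym y) r}"
proof -
  have e: "{y \<in> T p q n m. tuple_rank_le p (psym y) r} = (\<Union>j<p. phiS j p n m r ` XS p q n m r)"
  proof
    show "(\<Union>j<p. phiS j p n m r ` XS p q n m r) \<subseteq> {y \<in> T p q n m. tuple_rank_le p (psym y) r}"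
    proof
      fix y assume "y \<in> (\<Union>j<p. phiS j p n m r ` XS p q n m r)"
      then obtain j x where "j < p" "x \<in> XS p q n m r" "y = phiS j p n m r x" by blast
      then show "y \<in> {y \<in> T p q n m. tuple_rank_le p (psym y) r}"
        using phiS_T[of j p x q n m r] phiS_rank[of j p n m r x] by simp
    qed
  qed (rule S_sub)
  have "G_noetherian (phiS j p n m r ` XS p q n m r) \<and> G_stable (phiS j p n m r ` XS p q n m r)"
    if "j < p" for j
  proof (rule Gn_image)
    show "G_noetherian (XS p q n m r)"
      using Gn_closed_sub[OF assms XS_closed] that by simp
    show "act g x \<in> XS p q n m r \<and> phiS j p n m r (act g x) = act g (phiS j p n m r x)"
      if "x \<in> XS p q n m r" for g x using XS_act[OF that] phiS_eq by blast
  qed (rule phiS_poly)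
  then show ?thesis unfolding e using Gn_UN[of p "\<lambda>j. phiS j p n m r ` XS p q n m r"] by blast
qed


definition phiA :: "nat \<Rightarrow> nat \<Rightarrow> nat \<Rightarrow> nat \<Rightarrow> nat \<Rightarrow> pt \<Rightarrow> pt" where
  "phiA j q n m r x = \<lparr>psym = psym x, palt = slot j q n m r (palt x) x,
     pcol = (\<lambda>k. if k < n then pcol x k else (\<lambda>i. 0)), pfin = (\<lambda>k. if k < m then pfin x k else 0)\<rparr>"

definition XA :: "nat \<Rightarrow> nat \<Rightarrow> nat \<Rightarrow> nat \<Rightarrow> nat \<Rightarrow> pt set" where
  "XA p q n m r = {x \<in> T p (q-1) (n+2*r) (m+q). \<forall>a b. NS n r x a b = - NS n r x b a}"

lemma XA_closed: "zariski_closed_in (T p (q-1) (n+2*r) (m+q)) (XA p q n m r)"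
  unfolding zariski_closed_in_def
proof (intro exI conjI)
  let ?F = "(\<lambda>(a,b). (\<lambda>x. NS n r x a b + NS n r x b a)) ` UNIV"
  show "?F \<subseteq> polyfun" using pf_add[OF pf_NS pf_NS] by auto
  show "XA p q n m r = {x \<in> T p (q-1) (n+2*r) (m+q). \<forall>f\<in>?F. f x = 0}"
    unfolding XA_def by (simp add: eq_neg_iff_add_eq_0)
qed

lemma XA_act:
  assumes "x \<in> XA p q n m r"
  shows "act g x \<in> XA p q n m r"
proof -
  have x: "x \<in> T p (q-1) (n+2*r) (m+q)" and s0: "\<forall>a b. NS n r x a b = - NS n r x b a"
    using assms unfolding XA_def by blast+
  have s: "NS n r x a b = (-1) * NS n r x b a" for a b using s0[rule_format, of a b] by simp
  have "NS n r (act g x) a b = - NS n r (act g x) b a" for a b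
    unfolding NS_act using gmat_sym[OF s, where g=g and i=a and j=b] by simp
  then show ?thesis using act_T[OF x] unfolding XA_def by blast
qed

lemma phiA_eq: "phiA j q n m r (act g x) = act g (phiA j q n m r x)"
proof -
  have "slot j q n m r (palt (act g x)) (act g x) = (\<lambda>k. gmat g (slot j q n m r (palt x) x k))"
    using slot_act[of j q n m r g "palt x" x] by (simp add: act_def fun_eq_iff)
  then show ?thesis unfolding phiA_def by (simp add: act_def gvec_zero fun_eq_iff)
qed

lemma phiA_poly: "polymap (phiA j q n m r)"
proof (rule polymapI)
  fix k i j'
  show "(\<lambda>x. palt (phiA j q n m r x) k i j') \<in> polyfun"
    unfolding phiA_def using slot_poly[where Mx="\<lambda>x. palt x", OF pf_palt] by simp
  show "(\<lambda>x. psym (phiA j q n m r x) k i j') \<in> polyfun" unfolding phiA_def by (simp add: pf_psym)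
next
  fix k i
  show "(\<lambda>x. pcol (phiA j q n m r x) k i) \<in> polyfun"
    unfolding phiA_def by (cases "k < n") (simp_all add: pf_pcol pf_const)
next
  fix k
  show "(\<lambda>x. pfin (phiA j q n m r x) k) \<in> polyfun"
    unfolding phiA_def by (cases "k < m") (simp_all add: pf_pfin pf_const)
qed

lemma phiA_T:
  assumes j: "j < q" and xX: "x \<in> XA p q n m r"
  shows "phiA j q n m r x \<in> T p q n m"
proof -
  have x: "x \<in> T p (q-1) (n+2*r) (m+q)" and s0: "\<forall>a b. NS n r x a b = - NS n r x b a"
    using xX unfolding XA_def by blast+
  have s: "NS n r x a b = (-1) * NS n r x b a" for a b using s0[rule_format, of a b] by simp
  have M: "palt x k a b = (-1) * palt x k b a" for k a b using T_D(2)[OF x, of k a b] by simp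
  show ?thesis
  proof (rule T_I)
    fix k i j'
    show "palt (phiA j q n m r x) k i j' = - palt (phiA j q n m r x) k j' i"
      using slot_eps[OF M s, where j=j and p=q and m=m and k=k and a=i and b=j'] by (simp add: phiA_def)
    show "psym (phiA j q n m r x) k i j' = psym (phiA j q n m r x) k j' i"
      using T_D(1)[OF x, of k i j'] by (simp add: phiA_def)
    show "palt (phiA j q n m r x) k i j' = 0" if "q \<le> k"
      using slot_zero[OF j that] by (simp add: phiA_def)
    show "psym (phiA j q n m r x) k i j' = 0" if "p \<le> k"
      using T_D(3)[OF x that] by (simp add: phiA_def)
  next
    fix k i show "pcol (phiA j q n m r x) k i = 0" if "n \<le> k" using that by (simp add: phiA_def)
  next
    fix k show "pfin (phiA j q n m r x) k = 0" if "m \<le> k" using that by (simp add: phiA_def)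
  qed
qed

lemma phiA_rank:
  assumes j: "j < q"
  shows "tuple_rank_le q (palt (phiA j q n m r x)) r"
proof -
  define mu where "mu = (\<lambda>k. if k = j then 1 else pfin x (m+k))"
  have a: "\<exists>k<q. mu k \<noteq> 0" using j by (intro exI[of _ j]) (simp add: mu_def)
  have "(\<lambda>a b. \<Sum>k<q. mu k * palt (phiA j q n m r x) k a b) = NS n r x"
    using slot_sum[OF j, of mu x m n r "palt x"] by (simp add: phiA_def fun_eq_iff mu_def)
  then have b: "mat_rank_le (\<lambda>a b. \<Sum>k<q. mu k * palt (phiA j q n m r x) k a b) r"
    using mat_rank_NS by simp
  show ?thesis unfolding tuple_rank_le_def using a b by blast
qed

lemma A_sub:
  "{y \<in> T p q n m. tuple_rank_le q (palt y) r} \<subseteq> (\<Union>j<q. phiA j q n m r ` XA p q n m r)"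
proof
  fix y assume "y \<in> {y \<in> T p q n m. tuple_rank_le q (palt y) r}"
  then have yT: "y \<in> T p q n m" and "tuple_rank_le q (palt y) r" by auto
  then obtain lam j where j: "j < q" "lam j \<noteq> 0"
    and rk: "mat_rank_le (\<lambda>a b. \<Sum>k<q. lam k * palt y k a b) r"
    unfolding tuple_rank_le_def by blast
  define mu where "mu k = lam k / lam j" for k
  have mu1: "mu j = 1" using j unfolding mu_def by simp
  define N where "N = (\<lambda>a b. \<Sum>k<q. mu k * palt y k a b)"
  have eqN: "N = (\<lambda>a b. (1 / lam j) * (\<Sum>k<q. lam k * palt y k a b))"
    unfolding N_def mu_def by (simp add: sum_distrib_left fun_eq_iff)
  have NR: "mat_rank_le N r" unfolding eqN by (rule mat_rank_scale[OF rk])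
  obtain u cf where ucf: "\<And>a b. N a b = (\<Sum>l<r. u l a * cf b l)"
    using mat_rank_decomp[OF NR] by blast
  define x where "x = \<lparr>psym = psym y, palt = (\<lambda>k. if k < j then palt y k else if k < q - 1 then palt y (k+1) else (\<lambda>a b. 0)),
      pcol = srcCol n r (pcol y) u cf, pfin = srcFin m q (pfin y) mu\<rparr>"
  have NSx: "NS n r x a b = N a b" for a b
    using NS_src[of x n r "pcol y" u cf] ucf by (simp add: x_def)
  have Nsk: "N a b = - N b a" for a b
  proof -
    have "N a b = (\<Sum>k<q. - (mu k * palt y k b a))"
      unfolding N_def
    proof (rule sum.cong)
      fix k show "mu k * palt y k a b = - (mu k * palt y k b a)" using T_D(2)[OF yT, of k a b] by simp
    qed simp
    then show ?thesis unfolding N_def by (simp add: sum_negf)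
  qed
  have xT: "x \<in> T p (q-1) (n+2*r) (m+q)"
  proof (rule T_I)
    fix k i j'
    show "psym x k i j' = psym x k j' i" using T_D(1)[OF yT] by (simp add: x_def)
    show "palt x k i j' = - palt x k j' i"
    proof -
      have "palt y k' i j' = - palt y k' j' i" for k' using T_D(2)[OF yT, of k' i j'] .
      then show ?thesis by (simp add: x_def)
    qed
    show "palt x k i j' = 0" if "q - 1 \<le> k"
    proof -
      have "\<not> k < j" using that j by arith
      then show ?thesis using that by (simp add: x_def)
    qed
    show "psym x k i j' = 0" if "p \<le> k" using T_D(3)[OF yT that] by (simp add: x_def)
  next
    fix k i show "pcol x k i = 0" if "n + 2*r \<le> k" using that by (simp add: x_def srcCol_def)
  next
    fix k show "pfin x k = 0" if "m + q \<le> k" using that by (simp add: x_def srcFin_def)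
  qed
  have "NS n r x a b = - NS n r x b a" for a b unfolding NSx by (rule Nsk)
  then have xX: "x \<in> XA p q n m r" unfolding XA_def using xT by blast
  have "phiA j q n m r x = y"
  proof (rule pt.equality)
    have "slot j q n m r (palt x) x k a b = palt y k a b" for k a b
    proof -
      have e: "palt x = (\<lambda>k. if k < j then palt y k else if k < q - 1 then palt y (k+1) else (\<lambda>a b. 0))"
        by (simp add: x_def)
      show ?thesis unfolding e
      proof (rule slot_surj[where \<mu>=mu and Y="palt y", OF j(1) mu1])
        show "pfin x (m+k) = mu k" if "k < q" "k \<noteq> j" for k using that by (simp add: x_def srcFin_def)
        show "NS n r x a b = (\<Sum>k<q. mu k * palt y k a b)" for a b using NSx N_def by simp
        show "palt y k a b = 0" if "q \<le> k" for k a b using T_D(4)[OF yT that] .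
      qed
    qed
    then show "palt (phiA j q n m r x) = palt y" by (simp add: phiA_def fun_eq_iff)
    show "psym (phiA j q n m r x) = psym y" by (simp add: phiA_def x_def)
    show "pcol (phiA j q n m r x) = pcol y"
      using T_D(5)[OF yT] by (auto simp: phiA_def x_def srcCol_def fun_eq_iff)
    show "pfin (phiA j q n m r x) = pfin y"
      using T_D(6)[OF yT] by (auto simp: phiA_def x_def srcFin_def fun_eq_iff)
    show "pt.more (phiA j q n m r x) = pt.more y" by (simp add: phiA_def)
  qed
  then show "y \<in> (\<Union>j<q. phiA j q n m r ` XA p q n m r)" using xX j by blast
qed

lemma part2:
  assumes "0 < q \<Longrightarrow> G_noetherian (T p (q-1) (n+2*r) (m+q))"
  shows "G_noetherian {y \<in> T p q n m. tuple_rank_le q (palt y) r}"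
proof -
  have e: "{y \<in> T p q n m. tuple_rank_le q (palt y) r} = (\<Union>j<q. phiA j q n m r ` XA p q n m r)"
  proof
    show "(\<Union>j<q. phiA j q n m r ` XA p q n m r) \<subseteq> {y \<in> T p q n m. tuple_rank_le q (palt y) r}"
    proof
      fix y assume "y \<in> (\<Union>j<q. phiA j q n m r ` XA p q n m r)"
      then obtain j x where "j < q" "x \<in> XA p q n m r" "y = phiA j q n m r x" by blast
      then show "y \<in> {y \<in> T p q n m. tuple_rank_le q (palt y) r}"
        using phiA_T[of j q x p n m r] phiA_rank[of j q n m r x] by simp
    qed
  qed (rule A_sub)
  have "G_noetherian (phiA j q n m r ` XA p q n m r) \<and> G_stable (phiA j q n m r ` XA p q n m r)"
    if "j < q" for j
  proof (rule Gn_image)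
    show "G_noetherian (XA p q n m r)"
      using Gn_closed_sub[OF assms XA_closed] that by simp
    show "act g x \<in> XA p q n m r \<and> phiA j q n m r (act g x) = act g (phiA j q n m r x)"
      if "x \<in> XA p q n m r" for g x using XA_act[OF that] phiA_eq by blast
  qed (rule phiA_poly)
  then show ?thesis unfolding e using Gn_UN[of q "\<lambda>j. phiA j q n m r ` XA p q n m r"] by blast
qed


theorem lemma3p2:
  fixes p q n m r :: nat
  assumes "\<And>p' q' n' m'. p' < p \<or> (p' = p \<and> q' < q) \<or> (p' = p \<and> q' = q \<and> n' < n)
             \<Longrightarrow> G_noetherian (T p' q' n' m')"
  shows "G_noetherian {x \<in> T p q n m. tuple_rank_le p (psym x) r}
       \<and> G_noetherian {x \<in> T p q n m. tuple_rank_le q (palt x) r}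
       \<and> G_noetherian {x \<in> T p q n m. col_rank_lt n (pcol x)}"
proof (intro conjI)
  show "G_noetherian {x \<in> T p q n m. tuple_rank_le p (psym x) r}"
    by (rule part1) (rule assms, simp)
  show "G_noetherian {x \<in> T p q n m. tuple_rank_le q (palt x) r}"
    by (rule part2) (rule assms, simp)
  show "G_noetherian {x \<in> T p q n m. col_rank_lt n (pcol x)}"
  proof (rule part3)
    show "n = 0 \<or> G_noetherian (T p q (n-1) (m + n*n))"
    proof (cases "n = 0")
      case False
      then show ?thesis using assms[of p q "n-1" "m + n*n"] by simp
    qed simp
  qed
qed

end
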